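(* Let $\alpha\in(0,\frac{\pi}{2})$ and let $f:\Omega\to\mathbb{C}$ be holomorphic on an open set $\Omega\subseteq\mathbb{C}$ containing the sector $S^+_\alpha$. Then: (i) If there are $A,B\ge 0$ with $|f(z)|\le Ae^{B|z|}$ for all $z\in S^+_\alpha$, then for every $y_0\in\mathbb{R}$ $$\lim_{\varepsilon\to0^+}\int_0^\infty e^{-\varepsilon(y-y_0)^2}e^{iy^2}f(y)\,dy=e^{i\alpha}\int_0^\infty e^{i(ye^{i\alpha})^2}f(ye^{i\alpha})\,dy,$$ where both integrands (the left one for each $\varepsilon>0$) are absolutely integrable on $(0,\infty)$. (ii) If there are $A,B\ge0$ with $|f(z)|\le Ae^{B\,\mathrm{Im}(z)}$ for all $z\in S^+_\alpha$, then $$\lim_{R\to\infty}\int_0^R e^{iy^2}f(y)\,dy=e^{i\alpha}\int_0^\infty e^{i(ye^{i\alpha})^2}f(ye^{i\alpha})\,dy,$$ where the integrand on the right is absolutely integrable on $(0,\infty)$ and the integrand on the left is absolutely integrable on $(0,R)$ for every $R>0$.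
   Context: For $\alpha\in(0,\frac{\pi}{2})$, $S^+_\alpha:=\{z\in\mathbb{C}: z=0 \text{ or } 0\le \mathrm{Arg}(z)\le\alpha\}$ (closed sector). *)

theory Defs
  imports "HOL-Analysis.Analysis"
begin

definition sector_plus :: "real \<Rightarrow> complex set" where
  "sector_plus \<alpha> = {z. z = 0 \<or> (0 \<le> Arg z \<and> Arg z \<le> \<alpha>)}"

end

theory Submission
  imports Defs "HOL-Complex_Analysis.Complex_Analysis" "HOL-Real_Asymp.Real_Asymp"
begin

lemma Im_exp_rot: "Im (of_real r * exp(\<i> * of_real a) * exp(-(\<i> * of_real b))) = r * sin (a - b)"
proof -
  have "exp(\<i> * of_real a) * exp(-(\<i> * of_real b)) = exp(\<i> * of_real (a - b))"
    by (simp add: exp_add[symmetric] algebra_simps)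
  then show ?thesis by (simp add: mult.assoc Im_exp)
qed

lemma sector_K:
  assumes "0<\<alpha>" "\<alpha><pi/2" "0 \<le> Im z" "Im (z * exp(-(\<i> * of_real \<alpha>))) \<le> 0"
  shows "z \<in> sector_plus \<alpha>"
proof (cases "z = 0")
  case True then show ?thesis by (simp add: sector_plus_def)
next
  case False
  have a0: "0 \<le> Arg z" using assms(3) Arg_less_0 by blast
  have "Arg z \<le> \<alpha>"
  proof (rule ccontr)
    assume "\<not> Arg z \<le> \<alpha>"
    then have "0 < Arg z - \<alpha>" "Arg z - \<alpha> < pi" using Arg_le_pi[of z] assms by auto
    then have "0 < sin (Arg z - \<alpha>)" by (rule sin_gt_zero)
    moreover have "Im (z * exp(-(\<i> * of_real \<alpha>))) = norm z * sin (Arg z - \<alpha>)"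
      using Im_exp_rot[of "norm z" "Arg z" \<alpha>] Arg_eq[OF False] by simp
    ultimately show False using assms(4) False by (smt (verit) mult_pos_pos zero_less_norm_iff)
  qed
  with a0 show ?thesis by (simp add: sector_plus_def)
qed

lemma linepath_rot:
  fixes h :: "complex \<Rightarrow> complex"
  shows "contour_integral (linepath 0 (of_real R * c)) h = contour_integral (linepath 0 (of_real R)) (\<lambda>w. c * h (w * c))"
  unfolding contour_integral_integral
  by (intro integral_cong) (simp add: linepath_def scaleR_conv_of_real algebra_simps)

lemma convex_halfIm: "convex {z::complex. Im (z * d) \<le> 0}"
proof (unfold convex_def, safe)
  fix x y :: complex and u v :: real
  assume "Im (x*d) \<le> 0" "Im (y*d) \<le> 0" "0 \<le> u" "0 \<le> v" "u + v = 1"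
  moreover have "Im ((u *\<^sub>R x + v *\<^sub>R y) * d) = u * Im (x*d) + v * Im (y*d)"
    by (simp add: scaleR_conv_of_real distrib_right mult.assoc)
  ultimately show "Im ((u *\<^sub>R x + v *\<^sub>R y) * d) \<le> 0"
    by (simp add: add_nonpos_nonpos mult_nonneg_nonpos)
qed

lemma contour_identity:
  fixes h :: "complex \<Rightarrow> complex"
  assumes a: "0<\<alpha>" "\<alpha><pi/2" and \<Omega>: "sector_plus \<alpha> \<subseteq> \<Omega>" "open \<Omega>" and hol: "h holomorphic_on \<Omega>" and R: "0 < R"
  shows "integral {0..R} (\<lambda>x. h (of_real x)) =
     exp(\<i> * of_real \<alpha>) * integral {0..R} (\<lambda>t. h (of_real t * exp(\<i> * of_real \<alpha>)))
     - integral {0..\<alpha>} (\<lambda>t. h (of_real R * cis t) * of_real R * \<i> * cis t)"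
proof -
  define c where "c = exp(\<i> * of_real \<alpha>)"
  define K where "K = {z. 0 \<le> Im z \<and> Im (z * exp(-(\<i> * of_real \<alpha>))) \<le> 0} \<inter> cball 0 R"
  have cK: "convex K"
  proof -
    have "{z. 0 \<le> Im z \<and> Im (z * exp(-(\<i> * of_real \<alpha>))) \<le> 0} = {z. Im (z * (-1)) \<le> 0} \<inter> {z. Im (z * exp(-(\<i> * of_real \<alpha>))) \<le> 0}"
      by auto
    then have "K = ({z. Im (z * (-1)) \<le> 0} \<inter> {z. Im (z * exp(-(\<i> * of_real \<alpha>))) \<le> 0}) \<inter> cball 0 R"
      unfolding K_def by simp
    then show ?thesis by (simp only:) (intro convex_Int convex_cball convex_halfIm)
  qed
  have KO: "K \<subseteq> \<Omega>"
  proof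
    fix z assume "z \<in> K"
    then have "0 \<le> Im z" "Im (z * exp(-(\<i> * of_real \<alpha>))) \<le> 0" unfolding K_def by auto
    then have "z \<in> sector_plus \<alpha>" by (rule sector_K[OF a])
    then show "z \<in> \<Omega>" using \<Omega>(1) by (rule subsetD[rotated])
  qed
  have sa: "0 \<le> sin \<alpha>" "0 \<le> cos \<alpha>" using a by (intro sin_ge_zero cos_ge_zero; linarith)+
  define g1 where "g1 = linepath 0 (complex_of_real R)"
  define g2 where "g2 = part_circlepath 0 R 0 \<alpha>"
  define g3 where "g3 = linepath (of_real R * c) 0"
  have e1: "pathfinish g1 = pathstart g2" by (simp add: g1_def g2_def)
  have e2: "pathfinish g2 = pathstart g3" by (simp add: g3_def g2_def c_def)
  have e3: "pathfinish (g1 +++ g2 +++ g3) = pathstart (g1 +++ g2 +++ g3)" by (simp add: g1_def g3_def)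
  have v: "valid_path g1" "valid_path g2" "valid_path g3" by (simp_all add: g1_def g2_def g3_def)
  have vp: "valid_path (g1 +++ g2 +++ g3)" using e1 e2 v by (simp add: valid_path_join)
  have inK0: "0 \<in> K" using R by (simp add: K_def)
  have inKR: "complex_of_real R \<in> K" using R sa by (simp add: K_def Im_exp Re_exp)
  have inKRc: "complex_of_real R * c \<in> K" using R sa
    by (simp add: K_def c_def Im_exp Re_exp norm_mult Im_exp_rot[of R \<alpha> \<alpha>, simplified] )
  have "path_image g2 \<subseteq> K"
  proof
    fix z assume "z \<in> path_image g2"
    then obtain x where x: "0 \<le> x" "x \<le> \<alpha>" "z = of_real R * exp(\<i> * of_real x)"
      using a by (auto simp: g2_def path_image_part_circlepath)
    have "0 \<le> sin x" using x a by (intro sin_ge_zero) auto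
    moreover have "sin (x - \<alpha>) \<le> 0"
    proof -
      have "0 \<le> sin (\<alpha> - x)" using x a by (intro sin_ge_zero) auto
      then show ?thesis by (metis minus_diff_eq neg_0_le_iff_le sin_minus)
    qed
    moreover have I1: "Im (z * exp(-(\<i> * of_real \<alpha>))) = R * sin (x - \<alpha>)" using Im_exp_rot[of R x \<alpha>] x(3) by simp
    moreover have I2: "Im z = R * sin x" using x(3) by (simp add: Im_exp)
    moreover have I3: "norm z = R" using x(3) R by (simp add: norm_mult)
    ultimately show "z \<in> K" using R unfolding K_def mem_Collect_eq Int_iff mem_cball dist_0_norm
      by (simp add: mult_nonneg_nonpos)
  qed
  moreover have "path_image g1 \<subseteq> K" "path_image g3 \<subseteq> K"
    using inK0 inKR inKRc cK by (simp_all add: g1_def g3_def closed_segment_subset)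
  ultimately have pK: "path_image (g1 +++ g2 +++ g3) \<subseteq> K"
    using e1 e2 by (simp add: path_image_join)
  have "(h has_contour_integral 0) (g1 +++ g2 +++ g3)"
  proof (rule Cauchy_theorem_convex[OF _ cK finite.emptyI _ vp pK e3])
    show "continuous_on K h" using hol KO holomorphic_on_imp_continuous_on holomorphic_on_subset by blast
    show "h field_differentiable at x" if "x \<in> interior K - {}" for x
      using that interior_subset KO hol \<Omega>(2) holomorphic_on_imp_differentiable_at by blast
  qed
  then have ci: "h contour_integrable_on (g1 +++ g2 +++ g3)" "contour_integral (g1 +++ g2 +++ g3) h = 0"
    using contour_integral_unique by (auto simp: contour_integrable_on_def)
  then have ci1: "h contour_integrable_on g1" "h contour_integrable_on g2" "h contour_integrable_on g3"
    using v e1 e2 by (auto simp: valid_path_join)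
  have v23: "valid_path (g2 +++ g3)" using v e2 by (simp add: valid_path_join)
  have ci23: "h contour_integrable_on (g2 +++ g3)" using ci1 v by (intro contour_integrable_joinI)
  have "contour_integral (g1 +++ g2 +++ g3) h = contour_integral g1 h + contour_integral (g2 +++ g3) h"
    using ci1 ci23 v v23 by (intro contour_integral_join)
  moreover have "contour_integral (g2 +++ g3) h = contour_integral g2 h + contour_integral g3 h"
    using ci1 v by (intro contour_integral_join)
  ultimately have sum0: "contour_integral g1 h + contour_integral g2 h + contour_integral g3 h = 0"
    using ci by (simp add: add.assoc)
  have i1: "contour_integral g1 h = integral {0..R} (\<lambda>x. h (of_real x))"
    unfolding g1_def using R by (subst contour_integral_linepath_Reals_eq) auto
  have i2: "contour_integral g2 h = integral {0..\<alpha>} (\<lambda>t. h (of_real R * cis t) * of_real R * \<i> * cis t)"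
    unfolding g2_def using a by (subst contour_integral_part_circlepath_eq) auto
  have "contour_integral g3 h = - contour_integral (linepath 0 (of_real R * c)) h"
    unfolding g3_def by (metis contour_integral_reversepath reversepath_linepath valid_path_linepath)
  also have "\<dots> = - contour_integral (linepath 0 (of_real R)) (\<lambda>w. c * h (w * c))" by (simp add: linepath_rot)
  also have "\<dots> = - integral {0..R} (\<lambda>x. c * h (of_real x * c))"
    using R by (subst contour_integral_linepath_Reals_eq) auto
  also have "\<dots> = - (c * integral {0..R} (\<lambda>x. h (of_real x * c)))" by simp
  finally have i3: "contour_integral g3 h = - (c * integral {0..R} (\<lambda>x. h (of_real x * c)))" .
  show ?thesis using sum0 i1 i2 i3 unfolding c_def by (simp add: algebra_simps eq_neg_iff_add_eq_0)
qed

lemma integral_ends: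
  fixes F :: "real \<Rightarrow> complex"
  shows "integral {0..R} F = integral {0<..R} F" "integral {0<..<R} F = integral {0<..R} F"
proof -
  show "integral {0..R} F = integral {0<..R} F"
    by (rule integral_spike_set; rule negligible_subset[of "{0}"]) auto
  show "integral {0<..<R} F = integral {0<..R} F"
    by (rule integral_spike_set; rule negligible_subset[of "{R}"]) auto
qed

lemma trunc_lim:
  fixes F :: "real \<Rightarrow> complex"
  assumes F: "F absolutely_integrable_on {0<..}"
  shows "((\<lambda>R. integral {0<..R} F) \<longlongrightarrow> integral {0<..} F) at_top"
proof (rule tendsto_at_topI_sequentially)
  fix X :: "nat \<Rightarrow> real" assume X: "filterlim X at_top sequentially"
  define f where "f = (\<lambda>k x. if x \<in> {0<..X k} then F x else 0)"
  have Fi: "F integrable_on {0<..}" "(\<lambda>x. norm (F x)) integrable_on {0<..}"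
    using F absolutely_integrable_on_def by blast+
  have fi: "f k integrable_on {0<..}" for k
  proof -
    have "F absolutely_integrable_on {0<..X k}"
      by (rule set_integrable_subset[OF F]) auto
    then have "F integrable_on ({0<..X k} \<inter> {0<..})"
      by (simp add: absolutely_integrable_on_def Int_absorb2 subset_iff)
    then show ?thesis unfolding f_def by (simp only: integrable_restrict_Int)
  qed
  have ieq: "integral {0<..} (f k) = integral {0<..X k} F" for k
    unfolding f_def integral_restrict_Int by (intro arg_cong2[where f=integral]) auto
  have conv: "(\<lambda>k. f k x) \<longlonglongrightarrow> F x" if "x \<in> {0<..}" for x
  proof -
    have "eventually (\<lambda>k. x \<le> X k) sequentially"
      using X unfolding filterlim_at_top by blast
    then have "eventually (\<lambda>k. f k x = F x) sequentially"
      by eventually_elim (use that in \<open>auto simp: f_def\<close>)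
    then show ?thesis by (rule tendsto_eventually)
  qed
  have "(\<lambda>k. integral {0<..} (f k)) \<longlonglongrightarrow> integral {0<..} F"
    by (rule dominated_convergence(2)[OF fi Fi(2) _ conv]) (auto simp: f_def)
  then show "(\<lambda>n. integral {0<..X n} F) \<longlonglongrightarrow> integral {0<..} F" by (simp add: ieq)
qed


lemma quad_bound:
  fixes b q t :: real assumes "q > 0"
  shows "b*t - q*t^2 \<le> (b+1)^2/(4*q) - t"
proof -
  have "(b+1)^2/(4*q) - t - (b*t - q*t^2) = (2*q*t - (b+1))^2/(4*q)"
    using assms by (simp add: field_simps power2_eq_square)
  also have "\<dots> \<ge> 0" using assms by simp
  finally show ?thesis by simp
qed

lemma exp_minus_int0: "(\<lambda>t::real. exp (-1*t)) absolutely_integrable_on {0<..}"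
proof -
  have "(\<lambda>t::real. exp (-1*t)) absolutely_integrable_on {0..}"
    using integrable_on_exp_minus_to_infinity[of 1 0] by (subst absolutely_integrable_on_iff_nonneg) auto
  then show ?thesis by (rule set_integrable_subset) auto
qed

lemma Ioi_lebesgue: "{0::real<..} \<in> sets lebesgue"
proof (rule lebesgue_openin[of UNIV])
  show "UNIV \<in> sets lebesgue" using sets.top[of lebesgue] by simp
qed simp

lemma abs_int_bound:
  fixes F :: "real \<Rightarrow> 'a::euclidean_space"
  assumes cont: "continuous_on {0<..} F" and le: "\<And>t. t > 0 \<Longrightarrow> norm (F t) \<le> C * exp (b*t - q*t^2)" and q: "q > 0"
  shows "F absolutely_integrable_on {0<..}"
proof (rule measurable_bounded_by_integrable_imp_absolutely_integrable)
  show "F \<in> borel_measurable (lebesgue_on {0<..})"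
    by (rule continuous_imp_measurable_on_sets_lebesgue[OF cont]) (rule Ioi_lebesgue)
  show "{0::real<..} \<in> sets lebesgue" by (rule Ioi_lebesgue)
  define K where "K = (b+1)^2/(4*q)"
  show "(\<lambda>t. \<bar>C\<bar> * exp K * exp (-1*t)) integrable_on {0<..}"
  proof -
    have "(\<lambda>t::real. exp (-1*t)) integrable_on {0<..}" using exp_minus_int0 by (simp only: absolutely_integrable_on_def)
    then show ?thesis by (rule integrable_on_mult_right)
  qed
  fix t :: real assume t: "t \<in> {0<..}"
  have "norm (F t) \<le> C * exp (b*t - q*t^2)" using t le by auto
  also have "\<dots> \<le> \<bar>C\<bar> * exp (b*t - q*t^2)" by (intro mult_right_mono) auto
  also have "\<dots> \<le> \<bar>C\<bar> * exp (K - t)"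
    using quad_bound[OF q, of b t] unfolding K_def by (intro mult_left_mono) auto
  also have "\<dots> = \<bar>C\<bar> * exp K * exp (-1*t)" by (simp add: mult.assoc exp_add[symmetric])
  finally show "norm (F t) \<le> \<bar>C\<bar> * exp K * exp (-1*t)" .
qed


lemma sin_ge_lin:
  assumes "0 \<le> \<theta>" "\<theta> \<le> \<alpha>" "\<alpha> < pi/2"
  shows "\<theta> * cos \<alpha> \<le> sin \<theta>"
proof (cases "\<theta> = 0")
  case True then show ?thesis by simp
next
  case False
  then have "0 < \<theta>" using assms by simp
  from MVT2[OF this DERIV_sin] obtain z where z: "0 < z" "z < \<theta>" "sin \<theta> - sin 0 = (\<theta> - 0) * cos z"
    by auto
  have "cos \<alpha> \<le> cos z" using z assms by (intro cos_monotone_0_pi_le) auto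
  then have "\<theta> * cos \<alpha> \<le> \<theta> * cos z" using assms by (intro mult_left_mono) auto
  then show ?thesis using z by simp
qed

lemma norm_exp_isq: "norm (exp (\<i> * w^2)) = exp (-2 * Re w * Im w)"
  by (simp add: norm_exp_eq_Re power2_eq_square)

lemma norm_exp_gauss: "norm (exp (- (of_real e) * (w - of_real y0)^2)) = exp (- e * ((Re w - y0)^2 - (Im w)^2))"
  by (simp add: norm_exp_eq_Re power2_eq_square algebra_simps)

lemma sector_pt:
  assumes "0 \<le> r" "0 \<le> \<theta>" "\<theta> \<le> \<alpha>" "\<alpha> < pi/2"
  shows "of_real r * cis \<theta> \<in> sector_plus \<alpha>"
proof (cases "r = 0")
  case True then show ?thesis by (simp add: sector_plus_def)
next
  case False
  then have "Arg (of_real r * cis \<theta>) = \<theta>"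
    using assms by (intro Arg_unique') (auto simp: rcis_def)
  then show ?thesis using assms by (simp add: sector_plus_def)
qed

lemma expo_ii:
  fixes R c s ca B \<theta> :: real
  assumes "0 \<le> s" "ca \<le> c" "0 \<le> ca" "B \<le> R * ca" "0 \<le> R" "\<theta> * ca \<le> s"
  shows "-2 * R * c * (R * s) + B * (R * s) \<le> -(ca^2 * R^2) * \<theta>"
proof -
  have 1: "R * R * ca * s \<le> R * R * c * s" using assms by (intro mult_right_mono mult_left_mono) auto
  have 2: "B * (R * s) \<le> (R * ca) * (R * s)" using assms by (intro mult_right_mono) auto
  have 3: "R * R * ca * (\<theta> * ca) \<le> R * R * ca * s" using assms by (intro mult_left_mono) auto
  have e1: "-2 * R * c * (R * s) = -2 * (R * R * c * s)" by (simp add: algebra_simps)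
  have e2: "(R * ca) * (R * s) = R * R * ca * s" by (simp add: algebra_simps)
  have e3: "-(ca^2 * R^2) * \<theta> = -(R * R * ca * (\<theta> * ca))" by (simp add: power2_eq_square algebra_simps)
  show ?thesis unfolding e1 e3 using 1 2 3 e2 by linarith
qed

lemma expo_i:
  fixes R c s ca e y0 :: real
  assumes "0 \<le> s" "s \<le> 1" "ca \<le> c" "c \<le> 1" "0 < e" "e \<le> ca" "c^2 + s^2 = 1" "0 \<le> R"
  shows "- e * ((R * c - y0)^2 - (R * s)^2) + -2 * (R * c) * (R * s) \<le> -e * R^2 + 2 * e * \<bar>y0\<bar> * R"
proof -
  have "e * s \<le> ca * 1" using assms by (intro mult_mono) auto
  then have es: "e * s \<le> c" using assms by simp
  then have 1: "R * R * (e * s) * s \<le> R * R * c * s" using assms by (intro mult_right_mono mult_left_mono) auto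
  have "c * y0 \<le> \<bar>c * y0\<bar>" by simp
  also have "\<dots> = \<bar>c\<bar> * \<bar>y0\<bar>" by (simp add: abs_mult)
  also have "\<dots> \<le> 1 * \<bar>y0\<bar>" using assms by (intro mult_right_mono) auto
  finally have cy: "c * y0 \<le> \<bar>y0\<bar>" by simp
  then have 2: "e * R * (c * y0) \<le> e * R * \<bar>y0\<bar>" using assms by (intro mult_left_mono) auto
  have 3: "0 \<le> e * y0^2" using assms by simp
  have c2: "c^2 = 1 - s^2" using assms by simp
  have ex: "- e * ((R * c - y0)^2 - (R * s)^2) + -2 * (R * c) * (R * s) = -e * R^2 * c^2 + 2 * (e * R * (c * y0)) - e * y0^2 + e * R^2 * s^2 - 2 * (R * R * c * s)"
    by (simp add: power2_eq_square algebra_simps)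
  have ex2: "-e * R^2 * c^2 + e * R^2 * s^2 = -e * R^2 + 2 * (R * R * (e * s) * s)"
    unfolding c2 by (simp add: power2_eq_square algebra_simps)
  have ex3: "2 * e * \<bar>y0\<bar> * R = 2 * (e * R * \<bar>y0\<bar>)" by simp
  show ?thesis unfolding ex ex3 using 1 2 3 ex2 by linarith
qed

lemma expo_ray:
  fixes t ca sa e y0 :: real
  assumes "0 \<le> sa" "sa \<le> 1" "0 \<le> ca" "0 \<le> e" "e \<le> ca"
  shows "- e * ((t * ca - y0)^2 - (t * sa)^2) + -2 * (t * ca) * (t * sa) \<le> - (ca * sa) * t^2"
proof -
  have "e * sa \<le> ca * 1" using assms by (intro mult_mono) auto
  then have "e * sa * sa \<le> ca * sa" using assms by (intro mult_right_mono) auto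
  then have 1: "t * t * (e * sa * sa) \<le> t * t * (ca * sa)" by (intro mult_left_mono) auto
  have 2: "0 \<le> e * (t * ca - y0)^2" using assms by simp
  have ex: "- e * ((t * ca - y0)^2 - (t * sa)^2) + -2 * (t * ca) * (t * sa) = - (e * (t * ca - y0)^2) + t * t * (e * sa * sa) - 2 * (t * t * (ca * sa))"
    by (simp add: power2_eq_square algebra_simps)
  have ex2: "- (ca * sa) * t^2 = - (t * t * (ca * sa))" by (simp add: power2_eq_square algebra_simps)
  show ?thesis unfolding ex ex2 using 1 2 by linarith
qed

lemma expo_real:
  fixes y e y0 :: real
  assumes "0 \<le> e"
  shows "- e * (y - y0)^2 \<le> e*y0^2 - (e/2)*y^2"
proof -
  have "0 \<le> e * (y - 2*y0)^2" using assms by simp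
  then show ?thesis by (simp add: power2_eq_square algebra_simps)
qed


lemma open_lebesgue: "open (S::real set) \<Longrightarrow> S \<in> sets lebesgue"
proof (rule lebesgue_openin[of UNIV])
  show "UNIV \<in> sets lebesgue" using sets.top[of lebesgue] by simp
qed simp


lemma inv_lim: "k > 0 \<Longrightarrow> ((\<lambda>R::real. A / (k * R)) \<longlongrightarrow> 0) at_top"
  by real_asymp

lemma gauss_lim: "e > 0 \<Longrightarrow> ((\<lambda>R::real. a * (R * A * exp (-e * R^2 + k * R))) \<longlongrightarrow> 0) at_top"
  by real_asymp

context
  fixes \<alpha> :: real and f :: "complex \<Rightarrow> complex" and \<Omega> :: "complex set"
  assumes a0: "0 < \<alpha>" and a1: "\<alpha> < pi / 2"
    and o\<Omega>: "open \<Omega>" and s\<Omega>: "sector_plus \<alpha> \<subseteq> \<Omega>" and hol: "f holomorphic_on \<Omega>"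
begin

lemma fcont: "continuous_on \<Omega> f"
  using hol holomorphic_on_imp_continuous_on by blast

lemma cont_f_path: "continuous_on S p \<Longrightarrow> p ` S \<subseteq> sector_plus \<alpha> \<Longrightarrow> continuous_on S (\<lambda>t. f (p t))"
  by (rule continuous_on_compose2[OF fcont]) (use s\<Omega> in auto)

lemma ray_in: "0 \<le> t \<Longrightarrow> of_real t * exp(\<i> * of_real \<alpha>) \<in> sector_plus \<alpha>"
  using sector_pt[of t \<alpha> \<alpha>] a0 a1 by (simp add: cis_conv_exp)

lemma real_in: "0 \<le> y \<Longrightarrow> complex_of_real y \<in> sector_plus \<alpha>"
  using sector_pt[of y 0 \<alpha>] a0 a1 by simp

lemma arc_in: "0 \<le> R \<Longrightarrow> 0 \<le> \<theta> \<Longrightarrow> \<theta> \<le> \<alpha> \<Longrightarrow> of_real R * cis \<theta> \<in> sector_plus \<alpha>"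
  using sector_pt[of R \<theta> \<alpha>] a1 by simp

lemma ca_pos: "0 < cos \<alpha>" and sa_pos: "0 < sin \<alpha>" and sa_le1: "sin \<alpha> \<le> 1"
  using a0 a1 by (auto intro!: cos_gt_zero sin_gt_zero)

lemma ray_bound:
  assumes t: "0 \<le> t" and e: "0 \<le> e" "e \<le> cos \<alpha>" and A0: "0 \<le> A" and fb: "norm (f (of_real t * exp(\<i> * of_real \<alpha>))) \<le> A * exp (B*t)"
  shows "norm (exp (- of_real e * (of_real t * exp(\<i> * of_real \<alpha>) - of_real y0)^2) * exp (\<i> * (of_real t * exp(\<i> * of_real \<alpha>))^2)
           * f (of_real t * exp(\<i> * of_real \<alpha>))) \<le> A * exp (B*t - (cos \<alpha> * sin \<alpha>) * t^2)"
proof -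
  define w where "w = of_real t * exp(\<i> * of_real \<alpha>)"
  have Rw: "Re w = t * cos \<alpha>" "Im w = t * sin \<alpha>" by (simp_all add: w_def Re_exp Im_exp)
  have n1: "norm (exp (- of_real e * (w - of_real y0)^2)) = exp (- e * ((t * cos \<alpha> - y0)^2 - (t * sin \<alpha>)^2))"
    by (subst norm_exp_gauss) (simp only: Rw)
  have n2: "norm (exp (\<i> * w^2)) = exp (-2 * (t * cos \<alpha>) * (t * sin \<alpha>))"
    by (subst norm_exp_isq) (simp only: Rw mult.assoc)
  have "norm (exp (- of_real e * (w - of_real y0)^2) * exp (\<i> * w^2) * f w)
      = exp (- e * ((t * cos \<alpha> - y0)^2 - (t * sin \<alpha>)^2)) * exp (-2 * (t * cos \<alpha>) * (t * sin \<alpha>)) * norm (f w)"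
    by (simp only: norm_mult n1 n2)
  also have "\<dots> \<le> exp (- e * ((t * cos \<alpha> - y0)^2 - (t * sin \<alpha>)^2)) * exp (-2 * (t * cos \<alpha>) * (t * sin \<alpha>)) * (A * exp (B*t))"
    using fb unfolding w_def by (intro mult_left_mono) auto
  also have "\<dots> = A * exp ((- e * ((t * cos \<alpha> - y0)^2 - (t * sin \<alpha>)^2) + -2 * (t * cos \<alpha>) * (t * sin \<alpha>)) + B*t)"
    unfolding exp_add by (simp only: mult_ac)
  also have "\<dots> \<le> A * exp (- (cos \<alpha> * sin \<alpha>) * t^2 + B*t)"
    using expo_ray[of "sin \<alpha>" "cos \<alpha>" e t y0] sa_pos sa_le1 ca_pos e A0
    by (intro mult_left_mono) auto
  also have "\<dots> = A * exp (B*t - (cos \<alpha> * sin \<alpha>) * t^2)" by (simp add: algebra_simps)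
  finally show ?thesis unfolding w_def .
qed


lemma arc_cont:
  "continuous_on {0..\<alpha>} (\<lambda>t. G (of_real R * cis t) * f (of_real R * cis t) * of_real R * \<i> * cis t)"
  if "0 \<le> R" "continuous_on UNIV G"
proof -
  have "continuous_on {0..\<alpha>} (\<lambda>t. f (of_real R * cis t))"
    by (rule cont_f_path) (auto intro!: continuous_intros arc_in that)
  moreover have "continuous_on {0..\<alpha>} (\<lambda>t. G (of_real R * cis t))"
    by (rule continuous_on_compose2[OF that(2)]) (auto intro!: continuous_intros)
  ultimately show ?thesis by (intro continuous_intros)
qed

lemma arc_pt_ii:
  assumes R: "0 < R" "B \<le> R * cos \<alpha>" "0 \<le> B" "0 \<le> A" and th: "0 \<le> \<theta>" "\<theta> \<le> \<alpha>"
    and fb: "norm (f (of_real R * cis \<theta>)) \<le> A * exp (B * Im (of_real R * cis \<theta>))"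
  shows "norm (exp (\<i> * (of_real R * cis \<theta>)^2) * f (of_real R * cis \<theta>) * of_real R * \<i> * cis \<theta>)
          \<le> R * A * exp (- ((cos \<alpha>)^2 * R^2) * \<theta>)"
proof -
  define z where "z = of_real R * cis \<theta>"
  have Rz: "Re z = R * cos \<theta>" "Im z = R * sin \<theta>" by (simp_all add: z_def)
  have n2: "norm (exp (\<i> * z^2)) = exp (-2 * (R * cos \<theta>) * (R * sin \<theta>))"
    by (subst norm_exp_isq) (simp only: Rz mult.assoc)
  have "norm (exp (\<i> * z^2) * f z * of_real R * \<i> * cis \<theta>) = exp (-2 * (R * cos \<theta>) * (R * sin \<theta>)) * norm (f z) * R"
    using R by (simp only: norm_mult n2 norm_of_real norm_ii norm_cis mult_1_right abs_of_pos)
  also have "\<dots> \<le> exp (-2 * (R * cos \<theta>) * (R * sin \<theta>)) * (A * exp (B * (R * sin \<theta>))) * R"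
    using fb R unfolding z_def[symmetric] Rz by (intro mult_right_mono mult_left_mono) auto
  also have "\<dots> = R * A * exp (-2 * R * cos \<theta> * (R * sin \<theta>) + B * (R * sin \<theta>))"
    unfolding exp_add by (simp only: mult_ac)
  also have "\<dots> \<le> R * A * exp (- ((cos \<alpha>)^2 * R^2) * \<theta>)"
  proof -
    have "0 \<le> sin \<theta>" using th a1 by (intro sin_ge_zero) auto
    moreover have "cos \<alpha> \<le> cos \<theta>" using th a1 by (intro cos_monotone_0_pi_le) auto
    moreover have "\<theta> * cos \<alpha> \<le> sin \<theta>" using th a1 by (rule sin_ge_lin)
    ultimately have "-2 * R * cos \<theta> * (R * sin \<theta>) + B * (R * sin \<theta>) \<le> - ((cos \<alpha>)^2 * R^2) * \<theta>"
      using expo_ii[where R=R and c="cos \<theta>" and s="sin \<theta>" and ca="cos \<alpha>" and B=B and \<theta>=\<theta>] R ca_pos by auto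
    then show ?thesis using R by (intro mult_left_mono) auto
  qed
  finally show ?thesis unfolding z_def .
qed

lemma arc_ii_bound:
  assumes R: "0 < R" "B \<le> R * cos \<alpha>" "0 \<le> B" "0 \<le> A"
    and fb: "\<forall>z\<in>sector_plus \<alpha>. norm (f z) \<le> A * exp (B * Im z)"
  shows "norm (integral {0..\<alpha>} (\<lambda>t. exp (\<i> * (of_real R * cis t)^2) * f (of_real R * cis t) * of_real R * \<i> * cis t))
          \<le> A / ((cos \<alpha>)^2 * R)"
proof -
  define k where "k = (cos \<alpha>)^2 * R^2"
  have k: "0 < k" unfolding k_def using R ca_pos by simp
  have "norm (integral {0..\<alpha>} (\<lambda>t. exp (\<i> * (of_real R * cis t)^2) * f (of_real R * cis t) * of_real R * \<i> * cis t))
      \<le> integral {0..\<alpha>} (\<lambda>t. R * A * exp (- k * t))"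
  proof (rule integral_norm_bound_integral)
    show "(\<lambda>t. exp (\<i> * (of_real R * cis t)^2) * f (of_real R * cis t) * of_real R * \<i> * cis t) integrable_on {0..\<alpha>}"
    proof (rule integrable_continuous_interval)
      have cG: "continuous_on UNIV (\<lambda>z::complex. exp (\<i> * z^2))" by (intro continuous_intros)
      show "continuous_on {0..\<alpha>} (\<lambda>t. exp (\<i> * (of_real R * cis t)^2) * f (of_real R * cis t) * of_real R * \<i> * cis t)"
        using arc_cont[OF _ cG, of R] R by simp
    qed
    show "(\<lambda>t. R * A * exp (- k * t)) integrable_on {0..\<alpha>}"
      by (intro integrable_continuous_interval continuous_intros)
    fix t assume "t \<in> {0..\<alpha>}"
    then show "norm (exp (\<i> * (of_real R * cis t)^2) * f (of_real R * cis t) * of_real R * \<i> * cis t) \<le> R * A * exp (- k * t)"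
      unfolding k_def using arc_pt_ii[OF R, of t] fb arc_in[of R t] R by auto
  qed
  also have "\<dots> \<le> integral {0..} (\<lambda>t. R * A * exp (- k * t))"
  proof (rule integral_subset_le)
    have hi: "((\<lambda>t. R * A * exp (- k * t)) has_integral R * A * (exp (- k * 0) / k)) {0..}"
      by (intro has_integral_mult_right has_integral_exp_minus_to_infinity k)
    then show "(\<lambda>t. R * A * exp (- k * t)) integrable_on {0..}" by blast
    show "(\<lambda>t. R * A * exp (- k * t)) integrable_on {0..\<alpha>}"
      by (intro integrable_continuous_interval continuous_intros)
  qed (use R in auto)
  also have "\<dots> = R * A * (exp (- k * 0) / k)"
    by (intro integral_unique has_integral_mult_right has_integral_exp_minus_to_infinity k)
  also have "\<dots> = A / ((cos \<alpha>)^2 * R)" unfolding k_def using R by (simp add: power2_eq_square field_simps)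
  finally show ?thesis .
qed

lemma arc_pt_i:
  assumes R: "0 < R" and e: "0 < e" "e \<le> cos \<alpha>" and A: "0 \<le> A" and th: "0 \<le> \<theta>" "\<theta> \<le> \<alpha>"
    and fb: "norm (f (of_real R * cis \<theta>)) \<le> A * exp (B * R)"
  shows "norm (exp (- of_real e * (of_real R * cis \<theta> - of_real y0)^2) * exp (\<i> * (of_real R * cis \<theta>)^2) * f (of_real R * cis \<theta>) * of_real R * \<i> * cis \<theta>)
          \<le> R * A * exp (-e * R^2 + (2 * e * \<bar>y0\<bar> + B) * R)"
proof -
  define z where "z = of_real R * cis \<theta>"
  have Rz: "Re z = R * cos \<theta>" "Im z = R * sin \<theta>" by (simp_all add: z_def)
  have n1: "norm (exp (- of_real e * (z - of_real y0)^2)) = exp (- e * ((R * cos \<theta> - y0)^2 - (R * sin \<theta>)^2))"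
    by (subst norm_exp_gauss) (simp only: Rz)
  have n2: "norm (exp (\<i> * z^2)) = exp (-2 * (R * cos \<theta>) * (R * sin \<theta>))"
    by (subst norm_exp_isq) (simp only: Rz mult.assoc)
  have "norm (exp (- of_real e * (z - of_real y0)^2) * exp (\<i> * z^2) * f z * of_real R * \<i> * cis \<theta>)
      = exp (- e * ((R * cos \<theta> - y0)^2 - (R * sin \<theta>)^2)) * exp (-2 * (R * cos \<theta>) * (R * sin \<theta>)) * norm (f z) * R"
    using R by (simp only: norm_mult n1 n2 norm_of_real norm_ii norm_cis mult_1_right abs_of_pos)
  also have "\<dots> \<le> exp (- e * ((R * cos \<theta> - y0)^2 - (R * sin \<theta>)^2)) * exp (-2 * (R * cos \<theta>) * (R * sin \<theta>)) * (A * exp (B * R)) * R"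
    using fb R unfolding z_def[symmetric] by (intro mult_right_mono mult_left_mono) auto
  also have "\<dots> = R * A * exp ((- e * ((R * cos \<theta> - y0)^2 - (R * sin \<theta>)^2) + -2 * (R * cos \<theta>) * (R * sin \<theta>)) + B * R)"
    unfolding exp_add by (simp only: mult_ac)
  also have "\<dots> \<le> R * A * exp (-e * R^2 + (2 * e * \<bar>y0\<bar> + B) * R)"
  proof -
    have "0 \<le> sin \<theta>" using th a1 by (intro sin_ge_zero) auto
    moreover have "cos \<alpha> \<le> cos \<theta>" using th a1 by (intro cos_monotone_0_pi_le) auto
    ultimately have "- e * ((R * cos \<theta> - y0)^2 - (R * sin \<theta>)^2) + -2 * (R * cos \<theta>) * (R * sin \<theta>) \<le> -e * R^2 + 2 * e * \<bar>y0\<bar> * R"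
      using expo_i[where R=R and c="cos \<theta>" and s="sin \<theta>" and ca="cos \<alpha>" and e=e] R e
      by (auto simp: sin_le_one cos_le_one)
    then show ?thesis using R A by (intro mult_left_mono) (auto simp: algebra_simps)
  qed
  finally show ?thesis unfolding z_def .
qed


lemma part_ii:
  assumes ex: "\<exists>A B. A \<ge> 0 \<and> B \<ge> 0 \<and> (\<forall>z\<in>sector_plus \<alpha>. norm (f z) \<le> A * exp (B * Im z))"
  shows "(\<forall>R>0. (\<lambda>y::real. exp (\<i> * (complex_of_real y)^2) * f (complex_of_real y)) absolutely_integrable_on {0<..<R}) \<and>
     (\<lambda>y::real. exp (\<i> * (complex_of_real y * exp (\<i> * complex_of_real \<alpha>))^2) * f (complex_of_real y * exp (\<i> * complex_of_real \<alpha>)))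
                  absolutely_integrable_on {0<..} \<and>
     ((\<lambda>R. integral {0<..<R} (\<lambda>y::real. exp (\<i> * (complex_of_real y)^2) * f (complex_of_real y)))
        \<longlongrightarrow> exp (\<i> * complex_of_real \<alpha>) * integral {0<..} (\<lambda>y::real. exp (\<i> * (complex_of_real y * exp (\<i> * complex_of_real \<alpha>))^2) * f (complex_of_real y * exp (\<i> * complex_of_real \<alpha>))))
        at_top"
proof -
  obtain A B where AB: "A \<ge> 0" "B \<ge> 0" "\<forall>z\<in>sector_plus \<alpha>. norm (f z) \<le> A * exp (B * Im z)" using ex by blast
  define c where "c = exp (\<i> * complex_of_real \<alpha>)"
  define F where "F = (\<lambda>y::real. exp (\<i> * (complex_of_real y)^2) * f (complex_of_real y))"
  define G where "G = (\<lambda>y::real. exp (\<i> * (complex_of_real y * c)^2) * f (complex_of_real y * c))"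
  define arc where "arc = (\<lambda>R. integral {0..\<alpha>} (\<lambda>t. exp (\<i> * (of_real R * cis t)^2) * f (of_real R * cis t) * of_real R * \<i> * cis t))"
  have contF: "continuous_on {0..} F"
  proof -
    have "continuous_on {0..} (\<lambda>y::real. f (complex_of_real y))"
      by (rule cont_f_path) (auto intro!: continuous_intros real_in)
    then show ?thesis unfolding F_def by (intro continuous_intros)
  qed
  have absF: "\<forall>R>0. F absolutely_integrable_on {0<..<R}"
  proof safe
    fix R :: real assume "R > 0"
    have "F absolutely_integrable_on {0..R}"
      by (rule absolutely_integrable_continuous_real) (rule continuous_on_subset[OF contF], auto)
    then show "F absolutely_integrable_on {0<..<R}"
      by (rule set_integrable_subset) (auto intro: open_lebesgue)
  qed
  have contG: "continuous_on {0<..} G"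
  proof -
    have "continuous_on {0<..} (\<lambda>t::real. f (complex_of_real t * c))"
      by (rule cont_f_path) (auto intro!: continuous_intros ray_in simp: c_def)
    then show ?thesis unfolding G_def by (intro continuous_intros)
  qed
  have absG: "G absolutely_integrable_on {0<..}"
  proof (rule abs_int_bound[OF contG])
    show "0 < cos \<alpha> * sin \<alpha>" using ca_pos sa_pos by simp
    fix t :: real assume t: "0 < t"
    have "norm (f (of_real t * c)) \<le> A * exp (B * Im (of_real t * c))"
      using AB(3) ray_in[of t] t unfolding c_def by auto
    also have "\<dots> \<le> A * exp (B * t)"
    proof -
      have "Im (of_real t * c) = t * sin \<alpha>" by (simp add: c_def Im_exp)
      moreover have "B * (t * sin \<alpha>) \<le> B * (t * 1)" using AB t sa_le1 by (intro mult_left_mono) auto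
      ultimately show ?thesis using AB by (intro mult_left_mono) auto
    qed
    finally have fb: "norm (f (of_real t * c)) \<le> A * exp (B * t)" .
    have "norm (exp (- of_real 0 * (of_real t * c - of_real 0)^2) * exp (\<i> * (of_real t * c)^2) * f (of_real t * c))
        \<le> A * exp (B*t - (cos \<alpha> * sin \<alpha>) * t^2)"
      unfolding c_def by (rule ray_bound) (use t ca_pos AB fb in \<open>auto simp: c_def\<close>)
    then show "norm (G t) \<le> A * exp (B*t - (cos \<alpha> * sin \<alpha>) * t^2)" by (simp add: G_def)
  qed
  have hh: "(\<lambda>z. exp (\<i> * z^2) * f z) holomorphic_on \<Omega>" by (intro holomorphic_intros hol)
  have eqR: "integral {0<..<R} F = c * integral {0<..R} G - arc R" if R: "R > 0" for R
  proof -
    have "integral {0<..<R} F = integral {0..R} F" by (simp add: integral_ends)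
    also have "\<dots> = c * integral {0..R} G - arc R"
      using contour_identity[OF a0 a1 s\<Omega> o\<Omega> hh R] unfolding F_def G_def arc_def c_def by simp
    also have "\<dots> = c * integral {0<..R} G - arc R" by (simp add: integral_ends)
    finally show ?thesis .
  qed
  have arc0: "(arc \<longlongrightarrow> 0) at_top"
  proof (rule Lim_null_comparison)
    show "((\<lambda>R. A / ((cos \<alpha>)^2 * R)) \<longlongrightarrow> 0) at_top" using ca_pos by (intro inv_lim) simp
    have "eventually (\<lambda>R. R \<ge> max 1 (B / cos \<alpha>)) at_top" by (rule eventually_ge_at_top)
    then show "eventually (\<lambda>R. norm (arc R) \<le> A / ((cos \<alpha>)^2 * R)) at_top"
    proof eventually_elim
      case (elim R)
      then have R: "0 < R" "B \<le> R * cos \<alpha>" using ca_pos by (auto simp: field_simps)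
      show ?case unfolding arc_def by (rule arc_ii_bound[OF R AB(2) AB(1) AB(3)])
    qed
  qed
  have lim1: "((\<lambda>R. c * integral {0<..R} G - arc R) \<longlongrightarrow> c * integral {0<..} G - 0) at_top"
    by (intro tendsto_intros trunc_lim absG arc0)
  have lim: "((\<lambda>R. integral {0<..<R} F) \<longlongrightarrow> c * integral {0<..} G) at_top"
  proof -
    have "eventually (\<lambda>R. c * integral {0<..R} G - arc R = integral {0<..<R} F) at_top"
      using eventually_gt_at_top[of 0] by eventually_elim (simp add: eqR)
    from tendsto_cong[OF this] lim1 show ?thesis by simp
  qed
  show ?thesis unfolding c_def[symmetric] F_def[symmetric] G_def[symmetric] using absF absG lim by blast
qed


lemma part_i_y0:
  assumes AB: "A \<ge> 0" "B \<ge> 0" "\<forall>z\<in>sector_plus \<alpha>. norm (f z) \<le> A * exp (B * norm z)"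
  shows "(\<forall>\<epsilon>>0. (\<lambda>y::real. complex_of_real (exp (- \<epsilon> * (y - y0)^2)) * exp (\<i> * (complex_of_real y)^2) * f (complex_of_real y))
                  absolutely_integrable_on {0<..}) \<and>
        (\<lambda>y::real. exp (\<i> * (complex_of_real y * exp (\<i> * complex_of_real \<alpha>))^2) * f (complex_of_real y * exp (\<i> * complex_of_real \<alpha>)))
                  absolutely_integrable_on {0<..} \<and>
        ((\<lambda>\<epsilon>. integral {0<..} (\<lambda>y::real. complex_of_real (exp (- \<epsilon> * (y - y0)^2)) * exp (\<i> * (complex_of_real y)^2) * f (complex_of_real y)))
          \<longlongrightarrow> exp (\<i> * complex_of_real \<alpha>) * integral {0<..} (\<lambda>y::real. exp (\<i> * (complex_of_real y * exp (\<i> * complex_of_real \<alpha>))^2) * f (complex_of_real y * exp (\<i> * complex_of_real \<alpha>))))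
          (at_right 0)"
proof -
  define c where "c = exp (\<i> * complex_of_real \<alpha>)"
  define P where "P e = (\<lambda>y::real. complex_of_real (exp (- e * (y - y0)^2)) * exp (\<i> * (complex_of_real y)^2) * f (complex_of_real y))" for e
  define G0 where "G0 = (\<lambda>y::real. exp (\<i> * (complex_of_real y * c)^2) * f (complex_of_real y * c))"
  define Ge where "Ge e = (\<lambda>t::real. exp (- of_real e * (of_real t * c - of_real y0)^2) * exp (\<i> * (of_real t * c)^2) * f (of_real t * c))" for e
  define D where "D = (\<lambda>t::real. A * exp (B*t - (cos \<alpha> * sin \<alpha>) * t^2))"
  have nc: "norm c = 1" by (simp add: c_def)
  have fb_ray: "norm (f (of_real t * c)) \<le> A * exp (B * t)" if "0 \<le> t" for t
  proof -
    have "norm (of_real t * c) = t" using that nc by (simp add: norm_mult)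
    then show ?thesis using AB(3) ray_in[OF that] unfolding c_def by auto
  qed
  have fb_real: "norm (f (of_real y)) \<le> A * exp (B * y)" if "0 \<le> y" for y
    using AB(3) real_in[OF that] that by auto
  have fb_arc: "norm (f (of_real R * cis \<theta>)) \<le> A * exp (B * R)" if "0 \<le> R" "0 \<le> \<theta>" "\<theta> \<le> \<alpha>" for R \<theta>
  proof -
    have "norm (of_real R * cis \<theta>) = R" using that by (simp add: norm_mult)
    then show ?thesis using AB(3) arc_in[OF that] by auto
  qed
  have qpos: "0 < cos \<alpha> * sin \<alpha>" using ca_pos sa_pos by simp
  have contfr: "continuous_on {0<..} (\<lambda>y::real. f (complex_of_real y))"
    by (rule cont_f_path) (auto intro!: continuous_intros real_in)
  have contfc: "continuous_on {0<..} (\<lambda>t::real. f (complex_of_real t * c))"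
    by (rule cont_f_path) (auto intro!: continuous_intros ray_in simp: c_def)
  have absP: "P e absolutely_integrable_on {0<..}" if e: "e > 0" for e
  proof (rule abs_int_bound)
    show "continuous_on {0<..} (P e)" unfolding P_def using contfr by (intro continuous_intros)
    show "0 < e/2" using e by simp
    fix y :: real assume y: "0 < y"
    have n1: "norm (exp (\<i> * (complex_of_real y)^2)) = 1" by (subst norm_exp_isq) simp
    have "norm (P e y) = exp (- e * (y - y0)^2) * norm (f (of_real y))"
      unfolding P_def by (simp only: norm_mult n1 norm_of_real abs_exp_cancel mult_1_right)
    also have "\<dots> \<le> exp (e * y0^2 - (e/2) * y^2) * (A * exp (B * y))"
      using expo_real[of e y y0] e fb_real[of y] y by (intro mult_mono) auto
    also have "\<dots> = (A * exp (e * y0^2)) * exp (B * y - (e/2) * y^2)"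
      by (simp add: exp_add[symmetric] exp_diff algebra_simps)
    finally show "norm (P e y) \<le> (A * exp (e * y0^2)) * exp (B * y - (e/2) * y^2)" .
  qed
  have Gb: "norm (Ge e t) \<le> D t" if "0 \<le> t" "0 \<le> e" "e \<le> cos \<alpha>" for e t
    unfolding Ge_def D_def c_def by (rule ray_bound) (use that AB fb_ray in \<open>auto simp: c_def\<close>)
  have G0e: "G0 = Ge 0" by (simp add: G0_def Ge_def)
  have contGe: "continuous_on {0<..} (Ge e)" for e
    unfolding Ge_def using contfc by (intro continuous_intros)
  have absGe: "Ge e absolutely_integrable_on {0<..}" if "0 \<le> e" "e \<le> cos \<alpha>" for e
  proof (rule abs_int_bound[OF contGe _ qpos])
    fix t :: real assume "0 < t" then show "norm (Ge e t) \<le> A * exp (B*t - (cos \<alpha> * sin \<alpha>) * t^2)"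
      using Gb[of t e] that unfolding D_def by auto
  qed
  have absG0: "G0 absolutely_integrable_on {0<..}" unfolding G0e using absGe[of 0] ca_pos by simp
  have Dint: "D integrable_on {0<..}"
  proof -
    have "D absolutely_integrable_on {0<..}"
    proof (rule abs_int_bound[OF _ _ qpos])
      show "continuous_on {0<..} D" unfolding D_def by (intro continuous_intros)
      fix t :: real assume "0 < t" then show "norm (D t) \<le> A * exp (B*t - (cos \<alpha> * sin \<alpha>) * t^2)"
        using AB unfolding D_def by simp
    qed
    then show ?thesis by (simp add: absolutely_integrable_on_def)
  qed
  have eqe: "integral {0<..} (P e) = c * integral {0<..} (Ge e)" if e: "0 < e" "e \<le> cos \<alpha>" for e
  proof -
    define H where "H = (\<lambda>z. exp (- of_real e * (z - of_real y0)^2) * exp (\<i> * z^2) * f z)"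
    define arc where "arc = (\<lambda>R. integral {0..\<alpha>} (\<lambda>t. exp (- of_real e * (of_real R * cis t - of_real y0)^2) * exp (\<i> * (of_real R * cis t)^2) * f (of_real R * cis t) * of_real R * \<i> * cis t))"
    have hh: "H holomorphic_on \<Omega>" unfolding H_def by (intro holomorphic_intros hol)
    have PH: "P e = (\<lambda>x. H (of_real x))"
    proof
      fix y :: real
      have "exp (- of_real e * (complex_of_real y - of_real y0)^2) = exp (complex_of_real (- e * (y - y0)^2))" by simp
      also have "\<dots> = complex_of_real (exp (- e * (y - y0)^2))" by (rule exp_of_real)
      finally show "P e y = H (of_real y)" unfolding P_def H_def by simp
    qed
    have eqR: "integral {0<..R} (P e) = c * integral {0<..R} (Ge e) - arc R" if R: "R > 0" for R
    proof -
      have "integral {0<..R} (P e) = integral {0..R} (P e)" by (simp add: integral_ends)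
      also have "\<dots> = c * integral {0..R} (Ge e) - arc R"
        using contour_identity[OF a0 a1 s\<Omega> o\<Omega> hh R] unfolding PH H_def Ge_def arc_def c_def by simp
      also have "\<dots> = c * integral {0<..R} (Ge e) - arc R" by (simp add: integral_ends)
      finally show ?thesis .
    qed
    have arc0: "(arc \<longlongrightarrow> 0) at_top"
    proof (rule Lim_null_comparison)
      show "((\<lambda>R. \<alpha> * (R * A * exp (-e * R^2 + (2 * e * \<bar>y0\<bar> + B) * R))) \<longlongrightarrow> 0) at_top"
        using e by (intro gauss_lim) simp
      show "eventually (\<lambda>R. norm (arc R) \<le> \<alpha> * (R * A * exp (-e * R^2 + (2 * e * \<bar>y0\<bar> + B) * R))) at_top"
        using eventually_gt_at_top[of 0]
      proof eventually_elim
        case (elim R)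
        have cG: "continuous_on UNIV (\<lambda>z. exp (- of_real e * (z - of_real y0)^2) * exp (\<i> * z^2))"
          by (intro continuous_intros)
        have "norm (arc R) \<le> integral {0..\<alpha>} (\<lambda>t. R * A * exp (-e * R^2 + (2 * e * \<bar>y0\<bar> + B) * R))"
          unfolding arc_def
        proof (rule integral_norm_bound_integral)
          show "(\<lambda>t. exp (- of_real e * (of_real R * cis t - of_real y0)^2) * exp (\<i> * (of_real R * cis t)^2) * f (of_real R * cis t) * of_real R * \<i> * cis t) integrable_on {0..\<alpha>}"
            using arc_cont[OF _ cG, of R] elim by (intro integrable_continuous_interval) simp
          fix t assume "t \<in> {0..\<alpha>}"
          then show "norm (exp (- of_real e * (of_real R * cis t - of_real y0)^2) * exp (\<i> * (of_real R * cis t)^2) * f (of_real R * cis t) * of_real R * \<i> * cis t)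
              \<le> R * A * exp (-e * R^2 + (2 * e * \<bar>y0\<bar> + B) * R)"
            using arc_pt_i[OF elim e AB(1), of t B y0] fb_arc[of R t] elim by auto
        qed (rule integrable_continuous_interval, intro continuous_intros)
        also have "\<dots> = \<alpha> * (R * A * exp (-e * R^2 + (2 * e * \<bar>y0\<bar> + B) * R))" using a0 by simp
        finally show ?case .
      qed
    qed
    have lim1: "((\<lambda>R. c * integral {0<..R} (Ge e) - arc R) \<longlongrightarrow> c * integral {0<..} (Ge e) - 0) at_top"
      using e by (intro tendsto_intros trunc_lim absGe arc0) auto
    have lim2: "((\<lambda>R. integral {0<..R} (P e)) \<longlongrightarrow> c * integral {0<..} (Ge e)) at_top"
    proof -
      have "eventually (\<lambda>R. c * integral {0<..R} (Ge e) - arc R = integral {0<..R} (P e)) at_top"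
        using eventually_gt_at_top[of 0] by eventually_elim (simp add: eqR)
      from tendsto_cong[OF this] lim1 show ?thesis by simp
    qed
    have lim3: "((\<lambda>R. integral {0<..R} (P e)) \<longlongrightarrow> integral {0<..} (P e)) at_top"
      using absP e by (intro trunc_lim) auto
    show ?thesis using tendsto_unique[OF _ lim3 lim2] by simp
  qed
  have lim: "((\<lambda>e. integral {0<..} (P e)) \<longlongrightarrow> c * integral {0<..} G0) (at_right 0)"
  proof (rule tendsto_at_right_sequentially[OF ca_pos])
    fix S :: "nat \<Rightarrow> real"
    assume S: "\<And>n. 0 < S n" "\<And>n. S n < cos \<alpha>" "decseq S" "S \<longlonglongrightarrow> 0"
    have "(\<lambda>n. integral {0<..} (Ge (S n))) \<longlonglongrightarrow> integral {0<..} G0"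
    proof (rule dominated_convergence(2)[OF _ Dint])
      fix n show "Ge (S n) integrable_on {0<..}"
        using absGe[of "S n"] S(1,2)[of n] by (simp add: absolutely_integrable_on_def less_imp_le)
      fix t :: real assume t: "t \<in> {0<..}"
      show "norm (Ge (S n) t) \<le> D t" using Gb[of t "S n"] S(1,2)[of n] t by auto
    next
      fix t :: real assume t: "t \<in> {0<..}"
      have "(\<lambda>n. Ge (S n) t) \<longlonglongrightarrow> Ge 0 t"
        unfolding Ge_def by (intro tendsto_intros S(4))
      then show "(\<lambda>n. Ge (S n) t) \<longlonglongrightarrow> G0 t" by (simp add: G0e)
    qed
    then have "(\<lambda>n. c * integral {0<..} (Ge (S n))) \<longlonglongrightarrow> c * integral {0<..} G0"
      by (intro tendsto_intros)
    moreover have "integral {0<..} (P (S n)) = c * integral {0<..} (Ge (S n))" for n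
      using eqe[of "S n"] S(1,2)[of n] by simp
    ultimately show "(\<lambda>n. integral {0<..} (P (S n))) \<longlonglongrightarrow> c * integral {0<..} G0" by simp
  qed
  have absP': "\<forall>e>0. P e absolutely_integrable_on {0<..}" using absP by blast
  show ?thesis unfolding c_def[symmetric] G0_def[symmetric] P_def[symmetric] using absP' absG0 lim by blast
qed

end


theorem proposition2p1:
  fixes \<alpha> :: real and f :: "complex \<Rightarrow> complex" and \<Omega> :: "complex set"
  assumes "0 < \<alpha>" and "\<alpha> < pi / 2"
    and "open \<Omega>" and "sector_plus \<alpha> \<subseteq> \<Omega>" and "f holomorphic_on \<Omega>"
  shows
  "((\<exists>A B. A \<ge> 0 \<and> B \<ge> 0 \<and> (\<forall>z\<in>sector_plus \<alpha>. norm (f z) \<le> A * exp (B * norm z))) \<longrightarrow>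
     (\<forall>y0::real.
        (\<forall>\<epsilon>>0. (\<lambda>y::real. complex_of_real (exp (- \<epsilon> * (y - y0)^2)) * exp (\<i> * (complex_of_real y)^2) * f (complex_of_real y))
                  absolutely_integrable_on {0<..}) \<and>
        (\<lambda>y::real. exp (\<i> * (complex_of_real y * exp (\<i> * complex_of_real \<alpha>))^2) * f (complex_of_real y * exp (\<i> * complex_of_real \<alpha>)))
                  absolutely_integrable_on {0<..} \<and>
        ((\<lambda>\<epsilon>. integral {0<..} (\<lambda>y::real. complex_of_real (exp (- \<epsilon> * (y - y0)^2)) * exp (\<i> * (complex_of_real y)^2) * f (complex_of_real y)))
          \<longlongrightarrow> exp (\<i> * complex_of_real \<alpha>) * integral {0<..} (\<lambda>y::real. exp (\<i> * (complex_of_real y * exp (\<i> * complex_of_real \<alpha>))^2) * f (complex_of_real y * exp (\<i> * complex_of_real \<alpha>))))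
          (at_right 0)))
   \<and>
   ((\<exists>A B. A \<ge> 0 \<and> B \<ge> 0 \<and> (\<forall>z\<in>sector_plus \<alpha>. norm (f z) \<le> A * exp (B * Im z))) \<longrightarrow>
     (\<forall>R>0. (\<lambda>y::real. exp (\<i> * (complex_of_real y)^2) * f (complex_of_real y)) absolutely_integrable_on {0<..<R}) \<and>
     (\<lambda>y::real. exp (\<i> * (complex_of_real y * exp (\<i> * complex_of_real \<alpha>))^2) * f (complex_of_real y * exp (\<i> * complex_of_real \<alpha>)))
                  absolutely_integrable_on {0<..} \<and>
     ((\<lambda>R. integral {0<..<R} (\<lambda>y::real. exp (\<i> * (complex_of_real y)^2) * f (complex_of_real y)))
        \<longlongrightarrow> exp (\<i> * complex_of_real \<alpha>) * integral {0<..} (\<lambda>y::real. exp (\<i> * (complex_of_real y * exp (\<i> * complex_of_real \<alpha>))^2) * f (complex_of_real y * exp (\<i> * complex_of_real \<alpha>))))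
        at_top)"
    apply (rule conjI)
   apply (rule impI)
   apply (elim exE conjE)
  subgoal for A B by (intro allI part_i_y0[OF assms, where A=A and B=B])
  apply (rule impI)
  apply (erule part_ii[OF assms])
  done

end
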